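(* **Part (a).** Let $R\in\mathfrak{D}'\subseteq\mathfrak{D}$ with $\mathfrak{G}_{\mathfrak{D}'}(R)\subseteq\mathfrak{D}'$, where $$\mathfrak{G}_{\mathfrak{D}'}(R)=\{\mathcal{G}(\xi):\xi\in\mathcal{H}(G,R),\ G\in\mathfrak{D}'\}.$$ Then for every $S\in\mathfrak{D}$, the relation $R\sqsubseteq_\Gamma S$ with respect to $\mathfrak{D}'$ holds if and only if for every $\mathfrak{g}\in\mathfrak{G}_{\mathfrak{D}'}(R)$ there exists an injective map $\sigma_{\mathfrak{g}}:\mathcal{S}(\mathfrak{g},R)\to\mathcal{S}(\mathfrak{g},S)$. In this case, a strong $\Gamma$-scheme $\rho$ from $R$ to $S$ with respect to $\mathfrak{D}'$ is given by $$\rho_G(\xi)=\sigma_{\mathcal{G}(\xi)}(\iota_\xi)\circ\pi_\xi\quad\text{for } G\in\mathfrak{D}'_r,\ \xi\in\mathcal{H}(G,R).$$ **Part (b).** Let $\mathfrak{D}'\subseteq\mathfrak{P}$ or $\mathfrak{D}'\subseteq\mathfrak{P}^*$, and let $R\in\mathfrak{D}'$. Put $$\mathfrak{T}_{\mathfrak{D}'}(R)=\{\mathcal{T}(\xi):\xi\in\mathcal{H}(G,R),\ G\in\mathfrak{D}'\},$$ and assume $\mathfrak{T}_{\mathfrak{D}'}(R)\subseteq\mathfrak{D}'$. Then for every $S\in\mathfrak{D}$, $R\sqsubseteq_\Gamma S$ with respect to $\mathfrak{D}'$ holds if and only if for every $\mathfrak{t}\in\mathfrak{T}_{\mathfrak{D}'}(R)$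 there exists an injective map $\sigma_{\mathfrak{t}}:\mathcal{S}(\mathfrak{t},R)\to\mathcal{S}(\mathfrak{t},S)$. In this case, $\rho_G(\xi)=\sigma_{\mathcal{T}(\xi)}(\iota_\xi)\circ\pi_\xi$ defines a strong $\Gamma$-scheme from $R$ to $S$ with respect to $\mathfrak{D}'$. Here $\iota_\xi$ is regarded as a map on $V(\mathcal{T}(\xi))=V(\mathcal{G}(\xi))$.
   Context: **Digraphs and homomorphisms.** - A digraph $G$ is a pair $(V(G),A(G))$, where $V(G)$ is a finite non-empty set and $A(G)\subseteq V(G)\times V(G)$. Arcs are written $vw$. - An arc $vv$ is a loop. An arc $vw$ with $v\ne w$ is proper. $G^*$ is $G$ with all loops removed. - A homomorphism $\xi:G\to H$ is a map $V(G)\to V(H)$ with $\xi(v)\xi(w)\in A(H)$ for all $vw\in A(G)$. $\mathcal{H}(G,H)$ is the set of homomorphisms. - A homomorphism is strict if it maps every proper arc to a proper arc. $\mathcal{S}(G,H)$ is the set of strict homomorphisms. - The transitive hull of a digraph $G$ is the digraph on $V(G)$ whose arc set is the smallest transitive relation containing $A(G)$. **Classes of digraphs.** - $\mathfrak{D}$ is the class of all digraphs. - $\mathfrak{P}$ is the class of finite posets, i.e. reflexive, antisymmetric, transitive digraphs. - $\mathfrak{P}^*=\{P^*:P\in\mathfrak{P}\}$. **Connectivity.** - Two vertices $u,w$ are adjacent if $uw\in A(G)$ or $wu\in A(G)$. - For $X\subseteq V(G)$ and $v,w\in X$, the vertices $v$ and $w$ are connected in $X$ if $v=w$, or if there are $z_0=v,\dots,z_I=w$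 in $X$ with consecutive terms adjacent. - $\gamma_X(v)$ is the set of $w\in X$ connected to $v$ in $X$. - $\Gamma_\xi(v):=\gamma_{\xi^{-1}(\xi(v))}(v)$. **The quotient digraph.** For $\xi\in\mathcal{H}(G,H)$: - $\mathcal{G}(\xi)$ is the digraph with vertex set $\{\Gamma_\xi(v):v\in V(G)\}$, and $\mathfrak{a}\mathfrak{b}$ is an arc iff there are $a\in\mathfrak{a}$, $b\in\mathfrak{b}$ with $ab\in A(G)$. - $\mathcal{T}(\xi)$ is the transitive hull of $\mathcal{G}(\xi)$. - $\pi_\xi$ is the map $v\mapsto\Gamma_\xi(v)$. - $\iota_\xi$ is the map $\Gamma_\xi(v)\mapsto\xi(v)$. **Schemes.** - $\mathfrak{D}'_r$ is a fixed system of representatives of $\mathfrak{D}'$ up to isomorphism. - A Hom-scheme from $R$ to $S$ with respect to $\mathfrak{D}'$ is a family of maps $\rho_G:\mathcal{H}(G,R)\to\mathcal{H}(G,S)$, $G\in\mathfrak{D}'_r$. - It is strong if all $\rho_G$ are injective. - It is a $\Gamma$-scheme if $\Gamma_{\rho_G(\xi)}(v)=\Gamma_\xi(v)$ for all $G$, $\xi$ and $v$. - $R\sqsubseteq_\Gamma S$ with respect to $\mathfrak{D}'$ means that a strong $\Gamma$-scheme exists. *)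

theory Defs
  imports "HOL-Library.FuncSet"
begin

type_synonym 'v digraph = "'v set \<times> ('v \<times> 'v) set"

definition verts :: "'v digraph \<Rightarrow> 'v set" where "verts G = fst G"
definition arcs :: "'v digraph \<Rightarrow> ('v \<times> 'v) set" where "arcs G = snd G"

definition is_digraph :: "'v digraph \<Rightarrow> bool" where
  "is_digraph G \<longleftrightarrow> finite (verts G) \<and> verts G \<noteq> {} \<and> arcs G \<subseteq> verts G \<times> verts G"

definition remove_loops :: "'v digraph \<Rightarrow> 'v digraph" where
  "remove_loops G = (verts G, {(v,w) \<in> arcs G. v \<noteq> w})"

definition is_poset :: "'v digraph \<Rightarrow> bool" where
  "is_poset G \<longleftrightarrow> is_digraph G \<and> refl_on (verts G) (arcs G) \<and> antisym (arcs G) \<and> trans (arcs G)"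

definition is_poset_star :: "'v digraph \<Rightarrow> bool" where
  "is_poset_star G \<longleftrightarrow> (\<exists>P::'v digraph. is_poset P \<and> G = remove_loops P)"

definition Hom :: "'a digraph \<Rightarrow> 'b digraph \<Rightarrow> ('a \<Rightarrow> 'b) set" where
  "Hom G H = {\<xi> \<in> verts G \<rightarrow>\<^sub>E verts H. \<forall>(v,w) \<in> arcs G. (\<xi> v, \<xi> w) \<in> arcs H}"

definition Strict :: "'a digraph \<Rightarrow> 'b digraph \<Rightarrow> ('a \<Rightarrow> 'b) set" where
  "Strict G H = {\<xi> \<in> Hom G H. \<forall>(v,w) \<in> arcs G. v \<noteq> w \<longrightarrow> \<xi> v \<noteq> \<xi> w}"

definition digraph_iso :: "'a digraph \<Rightarrow> 'b digraph \<Rightarrow> bool" where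
  "digraph_iso G H \<longleftrightarrow> (\<exists>f. bij_betw f (verts G) (verts H) \<and>
     (\<forall>v \<in> verts G. \<forall>w \<in> verts G. (v,w) \<in> arcs G \<longleftrightarrow> (f v, f w) \<in> arcs H))"

text \<open>A class of digraphs is represented by a set of digraphs on vertex type nat;
  a digraph of arbitrary vertex type belongs to the class iff it is isomorphic
  to a member (classes are taken up to isomorphism).\<close>
definition in_class :: "nat digraph set \<Rightarrow> 'v digraph \<Rightarrow> bool" where
  "in_class C H \<longleftrightarrow> (\<exists>G \<in> C. digraph_iso G H)"

definition is_rep_system :: "nat digraph set \<Rightarrow> nat digraph set \<Rightarrow> bool" where
  "is_rep_system C Cr \<longleftrightarrow> Cr \<subseteq> C \<and> (\<forall>G \<in> C. \<exists>!H. H \<in> Cr \<and> digraph_iso G H)"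

definition adjacent :: "'v digraph \<Rightarrow> 'v \<Rightarrow> 'v \<Rightarrow> bool" where
  "adjacent G u w \<longleftrightarrow> (u,w) \<in> arcs G \<or> (w,u) \<in> arcs G"

definition connected_in :: "'v digraph \<Rightarrow> 'v set \<Rightarrow> 'v \<Rightarrow> 'v \<Rightarrow> bool" where
  "connected_in G X v w \<longleftrightarrow> v = w \<or>
     (\<exists>z::nat \<Rightarrow> 'v. \<exists>I. z 0 = v \<and> z I = w \<and> (\<forall>i\<le>I. z i \<in> X) \<and>
        (\<forall>i<I. adjacent G (z i) (z (Suc i))))"

definition gamma :: "'v digraph \<Rightarrow> 'v set \<Rightarrow> 'v \<Rightarrow> 'v set" where
  "gamma G X v = {w \<in> X. connected_in G X v w}"

definition Gam :: "'v digraph \<Rightarrow> ('v \<Rightarrow> 'b) \<Rightarrow> 'v \<Rightarrow> 'v set" where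
  "Gam G \<xi> v = gamma G {w \<in> verts G. \<xi> w = \<xi> v} v"

definition quot :: "'v digraph \<Rightarrow> ('v \<Rightarrow> 'b) \<Rightarrow> 'v set digraph" where
  "quot G \<xi> = (let Q = Gam G \<xi> ` verts G in
     (Q, {(a,b). a \<in> Q \<and> b \<in> Q \<and> (\<exists>x\<in>a. \<exists>y\<in>b. (x,y) \<in> arcs G)}))"

definition tquot :: "'v digraph \<Rightarrow> ('v \<Rightarrow> 'b) \<Rightarrow> 'v set digraph" where
  "tquot G \<xi> = (verts (quot G \<xi>), (arcs (quot G \<xi>))\<^sup>+)"

definition pi_map :: "'v digraph \<Rightarrow> ('v \<Rightarrow> 'b) \<Rightarrow> 'v \<Rightarrow> 'v set" where
  "pi_map G \<xi> = (\<lambda>v \<in> verts G. Gam G \<xi> v)"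

definition iota_map :: "'v digraph \<Rightarrow> ('v \<Rightarrow> 'b) \<Rightarrow> 'v set \<Rightarrow> 'b" where
  "iota_map G \<xi> = (\<lambda>c \<in> verts (quot G \<xi>). \<xi> (SOME v. v \<in> verts G \<and> c = Gam G \<xi> v))"

definition strong_Gamma_scheme ::
  "nat digraph set \<Rightarrow> 'r digraph \<Rightarrow> 's digraph \<Rightarrow> (nat digraph \<Rightarrow> (nat \<Rightarrow> 'r) \<Rightarrow> (nat \<Rightarrow> 's)) \<Rightarrow> bool" where
  "strong_Gamma_scheme Cr R S \<rho> \<longleftrightarrow> (\<forall>G \<in> Cr.
      (\<forall>\<xi> \<in> Hom G R. \<rho> G \<xi> \<in> Hom G S) \<and>
      inj_on (\<rho> G) (Hom G R) \<and>
      (\<forall>\<xi> \<in> Hom G R. \<forall>v \<in> verts G. Gam G (\<rho> G \<xi>) v = Gam G \<xi> v))"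

definition Gamma_below :: "nat digraph set \<Rightarrow> 'r digraph \<Rightarrow> 's digraph \<Rightarrow> bool" where
  "Gamma_below Cr R S \<longleftrightarrow> (\<exists>\<rho>. strong_Gamma_scheme Cr R S \<rho>)"

end

theory Submission
  imports Defs
begin

definition Fr :: "'v digraph \<Rightarrow> ('v \<Rightarrow> 'b) \<Rightarrow> ('v \<times> 'v) set" where
  "Fr G f = {(a,b). a \<in> verts G \<and> b \<in> verts G \<and> adjacent G a b \<and> f a = f b}"

definition Ein :: "'v digraph \<Rightarrow> 'v set \<Rightarrow> ('v \<times> 'v) set" where
  "Ein G X = {(a,b). a \<in> X \<and> b \<in> X \<and> adjacent G a b}"

lemma conn_imp_rtrancl:
  assumes "connected_in G X v w"
  shows "(v,w) \<in> (Ein G X)\<^sup>*"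
proof (cases "v = w")
  case True thus ?thesis by simp
next
  case False
  then obtain z I where z: "z 0 = v" "z I = w" "\<forall>i\<le>I. z i \<in> X"
     "\<forall>i<I. adjacent G (z i) (z (Suc i))"
    using assms unfolding connected_in_def by blast
  have "\<forall>i\<le>I. (v, z i) \<in> (Ein G X)\<^sup>*"
  proof (intro allI impI)
    fix i assume "i \<le> I" thus "(v, z i) \<in> (Ein G X)\<^sup>*"
    proof (induction i)
      case 0 thus ?case using z by simp
    next
      case (Suc i)
      hence "(z i, z (Suc i)) \<in> Ein G X" using z unfolding Ein_def by auto
      thus ?case using Suc by (meson Suc_leD rtrancl.rtrancl_into_rtrancl)
    qed
  qed
  thus ?thesis using z by auto
qed

lemma rtrancl_imp_conn:
  assumes "(v,w) \<in> (Ein G X)\<^sup>*"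
  shows "connected_in G X v w"
  using assms
proof (induction rule: rtrancl_induct)
  case base thus ?case by (simp add: connected_in_def)
next
  case (step b c)
  hence bc: "b \<in> X" "c \<in> X" "adjacent G b c" unfolding Ein_def by auto
  show ?case
  proof (cases "v = b")
    case True
    define z where "z = (\<lambda>i::nat. if i = 0 then v else c)"
    have "z 0 = v \<and> z 1 = c \<and> (\<forall>i\<le>1. z i \<in> X) \<and> (\<forall>i<1. adjacent G (z i) (z (Suc i)))"
      using bc True by (auto simp: z_def le_Suc_eq)
    thus ?thesis unfolding connected_in_def by blast
  next
    case False
    then obtain z I where z: "z 0 = v" "z I = b" "\<forall>i\<le>I. z i \<in> X"
       "\<forall>i<I. adjacent G (z i) (z (Suc i))"
      using step.IH unfolding connected_in_def by blast
    define z' where "z' = z(Suc I := c)"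
    have "z' 0 = v \<and> z' (Suc I) = c \<and> (\<forall>i\<le>Suc I. z' i \<in> X) \<and>
       (\<forall>i<Suc I. adjacent G (z' i) (z' (Suc i)))"
      using z bc by (auto simp: z'_def le_Suc_eq less_Suc_eq)
    thus ?thesis unfolding connected_in_def by blast
  qed
qed

lemma conn_iff: "connected_in G X v w \<longleftrightarrow> (v,w) \<in> (Ein G X)\<^sup>*"
  using conn_imp_rtrancl rtrancl_imp_conn by metis

lemma Fr_rtrancl_val:
  assumes "(v,w) \<in> (Fr G f)\<^sup>*" "v \<in> verts G"
  shows "w \<in> verts G \<and> f w = f v"
  using assms by (induction rule: rtrancl_induct) (auto simp: Fr_def)

lemma Gam_Fr:
  assumes "v \<in> verts G"
  shows "Gam G f v = {w. (v,w) \<in> (Fr G f)\<^sup>*}"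
proof -
  let ?X = "{w \<in> verts G. f w = f v}"
  have "Gam G f v = {w \<in> ?X. (v,w) \<in> (Ein G ?X)\<^sup>*}"
    unfolding Gam_def gamma_def by (simp add: conn_iff)
  also have "\<dots> = {w. (v,w) \<in> (Fr G f)\<^sup>*}"
  proof (intro equalityI subsetI)
    fix w assume "w \<in> {w \<in> ?X. (v,w) \<in> (Ein G ?X)\<^sup>*}"
    moreover have "Ein G ?X \<subseteq> Fr G f" unfolding Ein_def Fr_def by auto
    ultimately show "w \<in> {w. (v,w) \<in> (Fr G f)\<^sup>*}" using rtrancl_mono by blast
  next
    fix w assume "w \<in> {w. (v,w) \<in> (Fr G f)\<^sup>*}"
    hence "(v,w) \<in> (Fr G f)\<^sup>*" by simp
    hence "(v,w) \<in> (Ein G ?X)\<^sup>* \<and> w \<in> ?X"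
    proof (induction rule: rtrancl_induct)
      case base thus ?case using assms by simp
    next
      case (step b c)
      hence "(b,c) \<in> Ein G ?X" "c \<in> ?X" unfolding Fr_def Ein_def by auto
      thus ?case using step by (meson rtrancl.rtrancl_into_rtrancl)
    qed
    thus "w \<in> {w \<in> ?X. (v,w) \<in> (Ein G ?X)\<^sup>*}" by simp
  qed
  finally show ?thesis .
qed

lemma sym_Fr: "sym (Fr G f)"
  unfolding sym_def Fr_def adjacent_def by auto

lemma Gam_self: "v \<in> verts G \<Longrightarrow> v \<in> Gam G f v"
  by (subst Gam_Fr) auto

lemma Gam_val: "v \<in> verts G \<Longrightarrow> w \<in> Gam G f v \<Longrightarrow> w \<in> verts G \<and> f w = f v"
proof -
  assume a: "v \<in> verts G" "w \<in> Gam G f v"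
  have "(v,w) \<in> (Fr G f)\<^sup>*" using a(2) unfolding Gam_Fr[OF a(1)] by simp
  thus ?thesis by (rule Fr_rtrancl_val[OF _ a(1)])
qed

lemma Gam_eq:
  assumes "v \<in> verts G" "w \<in> Gam G f v"
  shows "Gam G f w = Gam G f v"
proof -
  have w: "w \<in> verts G" using Gam_val[OF assms] by simp
  have vw: "(v,w) \<in> (Fr G f)\<^sup>*" using assms(2) unfolding Gam_Fr[OF assms(1)] by simp
  have c: "(Fr G f)\<inverse> = Fr G f" using sym_Fr[of G f] by (simp only: sym_conv_converse_eq)
  have wv: "(w,v) \<in> (Fr G f)\<^sup>*" using rtrancl_converseI[OF vw] unfolding c .
  show ?thesis unfolding Gam_Fr[OF w] Gam_Fr[OF assms(1)]
  proof (intro equalityI subsetI)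
    fix u assume "u \<in> {u. (w,u) \<in> (Fr G f)\<^sup>*}"
    thus "u \<in> {u. (v,u) \<in> (Fr G f)\<^sup>*}" using rtrancl_trans[OF vw] by simp
  next
    fix u assume "u \<in> {u. (v,u) \<in> (Fr G f)\<^sup>*}"
    thus "u \<in> {u. (w,u) \<in> (Fr G f)\<^sup>*}" using rtrancl_trans[OF wv] by simp
  qed
qed

lemma Gam_adj:
  assumes "v \<in> verts G" "w \<in> verts G" "adjacent G v w" "f v = f w"
  shows "w \<in> Gam G f v"
proof -
  have "(v,w) \<in> Fr G f" using assms unfolding Fr_def by simp
  thus ?thesis unfolding Gam_Fr[OF assms(1)] by simp
qed

lemma Gam_cong:
  assumes "v \<in> verts G"
    and "\<And>a b. a \<in> verts G \<Longrightarrow> b \<in> verts G \<Longrightarrow> adjacent G a b \<Longrightarrow> (f a = f b \<longleftrightarrow> h a = h b)"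
  shows "Gam G f v = Gam G h v"
proof -
  have "Fr G f = Fr G h" using assms(2) unfolding Fr_def by auto
  thus ?thesis unfolding Gam_Fr[OF assms(1)] by simp
qed

lemma Gam_same_iff:
  assumes "v \<in> verts G" "w \<in> verts G"
  shows "Gam G f w = Gam G f v \<longleftrightarrow> w \<in> Gam G f v"
proof
  assume "Gam G f w = Gam G f v" thus "w \<in> Gam G f v" using Gam_self[OF assms(2), of f] by simp
next
  assume "w \<in> Gam G f v" thus "Gam G f w = Gam G f v" by (rule Gam_eq[OF assms(1)])
qed

lemma StrictD: "\<zeta> \<in> Strict G H \<Longrightarrow> (v,w) \<in> arcs G \<Longrightarrow> v \<noteq> w \<Longrightarrow> \<zeta> v \<noteq> \<zeta> w"
  unfolding Strict_def by auto

lemma StrictI: "\<zeta> \<in> Hom G H \<Longrightarrow> (\<And>v w. (v,w) \<in> arcs G \<Longrightarrow> v \<noteq> w \<Longrightarrow> \<zeta> v \<noteq> \<zeta> w) \<Longrightarrow> \<zeta> \<in> Strict G H"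
  unfolding Strict_def by auto

lemma Strict_Hom: "\<zeta> \<in> Strict G H \<Longrightarrow> \<zeta> \<in> Hom G H"
  unfolding Strict_def by auto

lemma HomD: "\<zeta> \<in> Hom G H \<Longrightarrow> (v,w) \<in> arcs G \<Longrightarrow> (\<zeta> v, \<zeta> w) \<in> arcs H"
  unfolding Hom_def by auto

lemma HomD2: "\<zeta> \<in> Hom G H \<Longrightarrow> v \<in> verts G \<Longrightarrow> \<zeta> v \<in> verts H"
  unfolding Hom_def by auto

lemma HomD3: "\<zeta> \<in> Hom G H \<Longrightarrow> v \<notin> verts G \<Longrightarrow> \<zeta> v = undefined"
  unfolding Hom_def by auto

lemma HomI: "(\<And>v. v \<in> verts G \<Longrightarrow> \<zeta> v \<in> verts H) \<Longrightarrow> (\<And>v. v \<notin> verts G \<Longrightarrow> \<zeta> v = undefined)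
   \<Longrightarrow> (\<And>v w. (v,w) \<in> arcs G \<Longrightarrow> (\<zeta> v, \<zeta> w) \<in> arcs H) \<Longrightarrow> \<zeta> \<in> Hom G H"
  unfolding Hom_def by auto

lemma Hom_ext: "\<zeta>1 \<in> Hom G H \<Longrightarrow> \<zeta>2 \<in> Hom G H \<Longrightarrow> (\<And>v. v \<in> verts G \<Longrightarrow> \<zeta>1 v = \<zeta>2 v) \<Longrightarrow> \<zeta>1 = \<zeta>2"
  using HomD3 by (metis ext)

lemma strict_iff:
  assumes "arcs h \<subseteq> verts h \<times> verts h" "\<zeta> \<in> Hom h X"
  shows "\<zeta> \<in> Strict h X \<longleftrightarrow> (\<forall>v\<in>verts h. Gam h \<zeta> v = {v})"
proof
  assume s: "\<zeta> \<in> Strict h X"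
  have sub: "Fr h \<zeta> \<subseteq> Id"
  proof
    fix p assume "p \<in> Fr h \<zeta>"
    then obtain a b where p: "p = (a,b)" "(a,b) \<in> arcs h \<or> (b,a) \<in> arcs h" "\<zeta> a = \<zeta> b"
      unfolding Fr_def adjacent_def by blast
    have "a = b" using p(2,3) StrictD[OF s] by metis
    thus "p \<in> Id" using p(1) by simp
  qed
  have eq: "v = w" if "(v,w) \<in> (Fr h \<zeta>)\<^sup>*" for v w
    using that
  proof (induction rule: rtrancl_induct)
    case base thus ?case by simp
  next
    case (step b c) thus ?case using sub by blast
  qed
  show "\<forall>v\<in>verts h. Gam h \<zeta> v = {v}"
  proof (intro ballI)
    fix v assume v: "v \<in> verts h"
    have "Gam h \<zeta> v \<subseteq> {v}" unfolding Gam_Fr[OF v] using eq by blast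
    thus "Gam h \<zeta> v = {v}" using Gam_self[OF v, of \<zeta>] by blast
  qed
next
  assume g: "\<forall>v\<in>verts h. Gam h \<zeta> v = {v}"
  show "\<zeta> \<in> Strict h X"
  proof (rule StrictI[OF assms(2)])
    fix v w assume vw: "(v,w) \<in> arcs h" "v \<noteq> w"
    have vv: "v \<in> verts h" "w \<in> verts h" using vw assms(1) by auto
    have "\<zeta> v = \<zeta> w \<Longrightarrow> w \<in> Gam h \<zeta> v"
      using vv vw by (intro Gam_adj) (auto simp: adjacent_def)
    moreover have "Gam h \<zeta> v = {v}" using g vv(1) by (rule bspec)
    ultimately show "\<zeta> v \<noteq> \<zeta> w" using vw(2) by auto
  qed
qed


lemma quot_verts: "verts (quot G \<xi>) = Gam G \<xi> ` verts G"
  unfolding quot_def verts_def Let_def by simp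

lemma quot_arcs: "arcs (quot G \<xi>) = {(a,b). a \<in> Gam G \<xi> ` verts G \<and> b \<in> Gam G \<xi> ` verts G \<and>
   (\<exists>x\<in>a. \<exists>y\<in>b. (x,y) \<in> arcs G)}"
  unfolding quot_def arcs_def Let_def by simp

lemma tquot_verts: "verts (tquot G \<xi>) = verts (quot G \<xi>)"
  unfolding tquot_def verts_def by simp

lemma tquot_arcs: "arcs (tquot G \<xi>) = (arcs (quot G \<xi>))\<^sup>+"
  unfolding tquot_def arcs_def by simp

lemma quot_arcs_sub: "arcs (quot G \<xi>) \<subseteq> verts (quot G \<xi>) \<times> verts (quot G \<xi>)"
  unfolding quot_arcs quot_verts by auto

lemma tquot_arcs_sub: "arcs (tquot G \<xi>) \<subseteq> verts (tquot G \<xi>) \<times> verts (tquot G \<xi>)"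
  unfolding tquot_arcs tquot_verts using quot_arcs_sub trancl_subset_Sigma by blast

lemma pi_eq: "v \<in> verts G \<Longrightarrow> pi_map G \<xi> v = Gam G \<xi> v"
  unfolding pi_map_def by simp

lemma quot_mem:
  assumes "a \<in> verts (quot G \<xi>)" "x \<in> a"
  shows "x \<in> verts G \<and> a = Gam G \<xi> x"
proof -
  obtain v where v: "v \<in> verts G" "a = Gam G \<xi> v" using assms(1) unfolding quot_verts by blast
  have x: "x \<in> Gam G \<xi> v" using assms(2) v(2) by simp
  have "x \<in> verts G" using Gam_val[OF v(1) x] by simp
  moreover have "Gam G \<xi> x = Gam G \<xi> v" by (rule Gam_eq[OF v(1) x])
  ultimately show ?thesis using v(2) by simp
qed

lemma iota_eq:
  assumes v: "v \<in> verts G"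
  shows "iota_map G \<xi> (Gam G \<xi> v) = \<xi> v"
proof -
  have c: "Gam G \<xi> v \<in> verts (quot G \<xi>)" unfolding quot_verts using v by simp
  define u where "u = (SOME u. u \<in> verts G \<and> Gam G \<xi> v = Gam G \<xi> u)"
  have "\<exists>u. u \<in> verts G \<and> Gam G \<xi> v = Gam G \<xi> u" using v by blast
  hence u: "u \<in> verts G \<and> Gam G \<xi> v = Gam G \<xi> u" unfolding u_def by (rule someI_ex)
  have "u \<in> Gam G \<xi> v" using u Gam_self[of u G \<xi>] by simp
  hence "\<xi> u = \<xi> v" using Gam_val[OF v, of u \<xi>] by simp
  moreover have "iota_map G \<xi> (Gam G \<xi> v) = \<xi> u" unfolding iota_map_def u_def using c by simp
  ultimately show ?thesis by simp
qed

lemma pi_arc: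
  assumes "arcs G \<subseteq> verts G \<times> verts G" "(v,w) \<in> arcs G"
  shows "(Gam G \<xi> v, Gam G \<xi> w) \<in> arcs (quot G \<xi>)"
proof -
  have vw: "v \<in> verts G" "w \<in> verts G" using assms by auto
  show ?thesis unfolding quot_arcs using vw Gam_self[OF vw(1), of \<xi>] Gam_self[OF vw(2), of \<xi>] assms(2)
    by blast
qed

lemma quot_cong:
  assumes "\<forall>v\<in>verts G. Gam G \<xi>1 v = Gam G \<xi>2 v"
  shows "quot G \<xi>1 = quot G \<xi>2"
proof -
  have "Gam G \<xi>1 ` verts G = Gam G \<xi>2 ` verts G" using assms by (intro image_cong) auto
  thus ?thesis unfolding quot_def Let_def by simp
qed

lemma tquot_cong:
  assumes "\<forall>v\<in>verts G. Gam G \<xi>1 v = Gam G \<xi>2 v"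
  shows "tquot G \<xi>1 = tquot G \<xi>2"
  unfolding tquot_def using quot_cong[OF assms] by simp

lemma iota_hom_quot:
  assumes G: "arcs G \<subseteq> verts G \<times> verts G" and xi: "\<xi> \<in> Hom G R"
  shows "iota_map G \<xi> \<in> Hom (quot G \<xi>) R"
proof (rule HomI)
  fix c assume "c \<in> verts (quot G \<xi>)"
  then obtain v where v: "v \<in> verts G" "c = Gam G \<xi> v" unfolding quot_verts by blast
  show "iota_map G \<xi> c \<in> verts R" using v iota_eq[OF v(1), of \<xi>] HomD2[OF xi v(1)] by simp
next
  fix c assume "c \<notin> verts (quot G \<xi>)"
  thus "iota_map G \<xi> c = undefined" unfolding iota_map_def by simp
next
  fix a b assume ab: "(a,b) \<in> arcs (quot G \<xi>)"
  then obtain x y where xy: "x \<in> a" "y \<in> b" "(x,y) \<in> arcs G"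
    unfolding quot_arcs by blast
  have ab': "a \<in> verts (quot G \<xi>)" "b \<in> verts (quot G \<xi>)" using ab quot_arcs_sub[of G \<xi>] by auto
  have a: "x \<in> verts G" "a = Gam G \<xi> x" using quot_mem[OF ab'(1) xy(1)] by auto
  have b: "y \<in> verts G" "b = Gam G \<xi> y" using quot_mem[OF ab'(2) xy(2)] by auto
  show "(iota_map G \<xi> a, iota_map G \<xi> b) \<in> arcs R"
    using a b iota_eq[OF a(1), of \<xi>] iota_eq[OF b(1), of \<xi>] HomD[OF xi xy(3)] by simp
qed

lemma iota_strict_step:
  assumes G: "arcs G \<subseteq> verts G \<times> verts G" and xi: "\<xi> \<in> Hom G R"
    and ab: "(a,b) \<in> arcs (quot G \<xi>)" and eq: "iota_map G \<xi> a = iota_map G \<xi> b"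
  shows "a = b"
proof -
  obtain x y where xy: "x \<in> a" "y \<in> b" "(x,y) \<in> arcs G"
    using ab unfolding quot_arcs by blast
  have ab': "a \<in> verts (quot G \<xi>)" "b \<in> verts (quot G \<xi>)" using ab quot_arcs_sub[of G \<xi>] by auto
  have a: "x \<in> verts G" "a = Gam G \<xi> x" using quot_mem[OF ab'(1) xy(1)] by auto
  have b: "y \<in> verts G" "b = Gam G \<xi> y" using quot_mem[OF ab'(2) xy(2)] by auto
  have "\<xi> x = \<xi> y" using eq a b iota_eq[OF a(1), of \<xi>] iota_eq[OF b(1), of \<xi>] by simp
  hence "y \<in> Gam G \<xi> x" using a(1) b(1) xy(3) by (intro Gam_adj) (auto simp: adjacent_def)
  hence "Gam G \<xi> y = Gam G \<xi> x" by (rule Gam_eq[OF a(1)])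
  thus ?thesis using a(2) b(2) by simp
qed

lemma iota_strict_quot:
  assumes G: "arcs G \<subseteq> verts G \<times> verts G" and xi: "\<xi> \<in> Hom G R"
  shows "iota_map G \<xi> \<in> Strict (quot G \<xi>) R"
  using iota_strict_step[OF G xi] by (intro StrictI iota_hom_quot[OF G xi]) blast

lemma iota_strict_tquot:
  assumes G: "arcs G \<subseteq> verts G \<times> verts G" and xi: "\<xi> \<in> Hom G R"
    and tr: "trans (arcs R)" and an: "antisym (arcs R)"
  shows "iota_map G \<xi> \<in> Strict (tquot G \<xi>) R"
proof -
  let ?i = "iota_map G \<xi>" and ?E = "arcs (quot G \<xi>)"
  have h: "?i \<in> Hom (quot G \<xi>) R" by (rule iota_hom_quot[OF G xi])
  have tr1: "(?i a, ?i b) \<in> arcs R" if "(a,b) \<in> ?E\<^sup>+" for a b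
    using that
  proof (induction rule: trancl_induct)
    case (base y) thus ?case using HomD[OF h] by blast
  next
    case (step y z)
    have "(?i y, ?i z) \<in> arcs R" using HomD[OF h step(2)] .
    thus ?case using step(3) tr unfolding trans_def by blast
  qed
  have rt: "(a,b) \<in> ?E\<^sup>* \<Longrightarrow> ?i a = ?i b \<Longrightarrow> a = b" for a b
  proof (induction rule: converse_rtrancl_induct)
    case base thus ?case by simp
  next
    case (step a c)
    have ac: "(?i a, ?i c) \<in> arcs R" using HomD[OF h step(1)] .
    have "?i c = ?i b \<or> (?i c, ?i b) \<in> arcs R"
      using step(2) tr1 by (metis rtrancl_eq_or_trancl)
    hence "?i c = ?i a"
    proof
      assume "?i c = ?i b" thus ?thesis using step(4) by simp
    next
      assume "(?i c, ?i b) \<in> arcs R"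
      hence "(?i c, ?i a) \<in> arcs R" using step(4) by simp
      thus ?thesis using ac an unfolding antisym_def by blast
    qed
    hence "c = b" using step(3) step(4) by simp
    moreover have "a = c" using iota_strict_step[OF G xi step(1)] \<open>?i c = ?i a\<close> by simp
    ultimately show ?case by simp
  qed
  show ?thesis
  proof (rule StrictI)
    show "?i \<in> Hom (tquot G \<xi>) R"
    proof (rule HomI)
      fix c assume "c \<in> verts (tquot G \<xi>)" thus "?i c \<in> verts R"
        using HomD2[OF h] unfolding tquot_verts by blast
    next
      fix c assume "c \<notin> verts (tquot G \<xi>)" thus "?i c = undefined"
        using HomD3[OF h] unfolding tquot_verts by blast
    next
      fix a b assume "(a,b) \<in> arcs (tquot G \<xi>)" thus "(?i a, ?i b) \<in> arcs R"
        using tr1 unfolding tquot_arcs by blast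
    qed
  next
    fix a b assume ab: "(a,b) \<in> arcs (tquot G \<xi>)" "a \<noteq> b"
    have "(a,b) \<in> ?E\<^sup>*" using ab(1) unfolding tquot_arcs by simp
    thus "?i a \<noteq> ?i b" using rt ab(2) by blast
  qed
qed


lemma scheme_G:
  fixes G :: "'v digraph" and R :: "'r digraph" and S :: "'s digraph"
    and Q :: "('v \<Rightarrow> 'r) \<Rightarrow> 'v set digraph"
    and \<sigma> :: "'v set digraph \<Rightarrow> ('v set \<Rightarrow> 'r) \<Rightarrow> ('v set \<Rightarrow> 's)"
  assumes G: "arcs G \<subseteq> verts G \<times> verts G"
   and Qcong: "\<And>\<xi>1 \<xi>2. \<xi>1 \<in> Hom G R \<Longrightarrow> \<xi>2 \<in> Hom G R \<Longrightarrow> (\<forall>v\<in>verts G. Gam G \<xi>1 v = Gam G \<xi>2 v) \<Longrightarrow> Q \<xi>1 = Q \<xi>2"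
   and Qv: "\<And>\<xi>. \<xi> \<in> Hom G R \<Longrightarrow> verts (Q \<xi>) = verts (quot G \<xi>)"
   and Qa: "\<And>\<xi>. \<xi> \<in> Hom G R \<Longrightarrow> arcs (quot G \<xi>) \<subseteq> arcs (Q \<xi>)"
   and Qi: "\<And>\<xi>. \<xi> \<in> Hom G R \<Longrightarrow> iota_map G \<xi> \<in> Strict (Q \<xi>) R"
   and sig: "\<And>\<xi>. \<xi> \<in> Hom G R \<Longrightarrow> \<sigma> (Q \<xi>) \<in> Strict (Q \<xi>) R \<rightarrow> Strict (Q \<xi>) S \<and> inj_on (\<sigma> (Q \<xi>)) (Strict (Q \<xi>) R)"
  shows "(\<forall>\<xi>\<in>Hom G R. restrict (\<sigma> (Q \<xi>) (iota_map G \<xi>) \<circ> pi_map G \<xi>) (verts G) \<in> Hom G S) \<and>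
     inj_on (\<lambda>\<xi>. restrict (\<sigma> (Q \<xi>) (iota_map G \<xi>) \<circ> pi_map G \<xi>) (verts G)) (Hom G R) \<and>
     (\<forall>\<xi>\<in>Hom G R. \<forall>v\<in>verts G. Gam G (restrict (\<sigma> (Q \<xi>) (iota_map G \<xi>) \<circ> pi_map G \<xi>) (verts G)) v = Gam G \<xi> v)"
proof -
  define \<rho> where "\<rho> = (\<lambda>\<xi>. restrict (\<sigma> (Q \<xi>) (iota_map G \<xi>) \<circ> pi_map G \<xi>) (verts G))"
  define \<tau> where "\<tau> = (\<lambda>\<xi>. \<sigma> (Q \<xi>) (iota_map G \<xi>))"
  have rho_v: "\<rho> \<xi> v = \<tau> \<xi> (Gam G \<xi> v)" if "v \<in> verts G" for \<xi> v
    using that by (simp add: \<rho>_def \<tau>_def pi_eq)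
  have rho_nv: "\<rho> \<xi> v = undefined" if "v \<notin> verts G" for \<xi> v
    using that by (simp add: \<rho>_def)
  have tau: "\<tau> \<xi> \<in> Strict (Q \<xi>) S" if "\<xi> \<in> Hom G R" for \<xi>
    unfolding \<tau>_def using funcset_mem[OF conjunct1[OF sig[OF that]] Qi[OF that]] .
  have gv: "Gam G \<xi> v \<in> verts (Q \<xi>)" if "\<xi> \<in> Hom G R" "v \<in> verts G" for \<xi> v
    using that Qv[OF that(1)] unfolding quot_verts by simp
  have hom: "\<rho> \<xi> \<in> Hom G S" if x: "\<xi> \<in> Hom G R" for \<xi>
  proof (rule HomI)
    fix v assume v: "v \<in> verts G"
    show "\<rho> \<xi> v \<in> verts S" unfolding rho_v[OF v]
      by (rule HomD2[OF Strict_Hom[OF tau[OF x]] gv[OF x v]])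
  next
    fix v assume "v \<notin> verts G" thus "\<rho> \<xi> v = undefined" by (rule rho_nv)
  next
    fix v w assume vw: "(v,w) \<in> arcs G"
    have vv: "v \<in> verts G" "w \<in> verts G" using vw G by auto
    have "(Gam G \<xi> v, Gam G \<xi> w) \<in> arcs (Q \<xi>)" using pi_arc[OF G vw] Qa[OF x] by blast
    thus "(\<rho> \<xi> v, \<rho> \<xi> w) \<in> arcs S" unfolding rho_v[OF vv(1)] rho_v[OF vv(2)]
      by (rule HomD[OF Strict_Hom[OF tau[OF x]]])
  qed
  have gam: "Gam G (\<rho> \<xi>) v = Gam G \<xi> v" if x: "\<xi> \<in> Hom G R" and v: "v \<in> verts G" for \<xi> v
  proof (rule Gam_cong[OF v])
    fix a b assume a: "a \<in> verts G" and b: "b \<in> verts G" and ad: "adjacent G a b"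
    show "\<rho> \<xi> a = \<rho> \<xi> b \<longleftrightarrow> \<xi> a = \<xi> b"
    proof
      assume e: "\<rho> \<xi> a = \<rho> \<xi> b"
      have "Gam G \<xi> a = Gam G \<xi> b"
      proof (rule ccontr)
        assume ne: "Gam G \<xi> a \<noteq> Gam G \<xi> b"
        have "(Gam G \<xi> a, Gam G \<xi> b) \<in> arcs (Q \<xi>) \<or> (Gam G \<xi> b, Gam G \<xi> a) \<in> arcs (Q \<xi>)"
          using ad pi_arc[OF G, of a b \<xi>] pi_arc[OF G, of b a \<xi>] Qa[OF x] unfolding adjacent_def by blast
        hence "\<tau> \<xi> (Gam G \<xi> a) \<noteq> \<tau> \<xi> (Gam G \<xi> b)"
          using StrictD[OF tau[OF x]] ne by metis
        thus False using e unfolding rho_v[OF a] rho_v[OF b] by simp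
      qed
      hence "b \<in> Gam G \<xi> a" using Gam_self[OF b, of \<xi>] by simp
      thus "\<xi> a = \<xi> b" using Gam_val[OF a, of b \<xi>] by simp
    next
      assume e: "\<xi> a = \<xi> b"
      have "b \<in> Gam G \<xi> a" using a b ad e by (rule Gam_adj)
      hence "Gam G \<xi> b = Gam G \<xi> a" by (rule Gam_eq[OF a])
      thus "\<rho> \<xi> a = \<rho> \<xi> b" unfolding rho_v[OF a] rho_v[OF b] by simp
    qed
  qed
  have inj: "inj_on \<rho> (Hom G R)"
  proof (rule inj_onI)
    fix \<xi>1 \<xi>2 assume x1: "\<xi>1 \<in> Hom G R" and x2: "\<xi>2 \<in> Hom G R" and e: "\<rho> \<xi>1 = \<rho> \<xi>2"
    have gg: "\<forall>v\<in>verts G. Gam G \<xi>1 v = Gam G \<xi>2 v"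
    proof
      fix v assume v: "v \<in> verts G"
      have "Gam G \<xi>1 v = Gam G (\<rho> \<xi>1) v" using gam[OF x1 v] by simp
      also have "\<dots> = Gam G (\<rho> \<xi>2) v" using e by simp
      also have "\<dots> = Gam G \<xi>2 v" using gam[OF x2 v] .
      finally show "Gam G \<xi>1 v = Gam G \<xi>2 v" .
    qed
    have q: "Q \<xi>1 = Q \<xi>2" by (rule Qcong[OF x1 x2 gg])
    have t2: "\<tau> \<xi>2 \<in> Strict (Q \<xi>1) S" using tau[OF x2] q by simp
    have "\<tau> \<xi>1 = \<tau> \<xi>2"
    proof (rule Hom_ext[OF Strict_Hom[OF tau[OF x1]] Strict_Hom[OF t2]])
      fix c assume "c \<in> verts (Q \<xi>1)"
      then obtain v where v: "v \<in> verts G" "c = Gam G \<xi>1 v" unfolding Qv[OF x1] quot_verts by blast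
      have "\<tau> \<xi>1 c = \<rho> \<xi>1 v" using rho_v[OF v(1), of \<xi>1] v(2) by simp
      also have "\<dots> = \<rho> \<xi>2 v" using e by simp
      also have "\<dots> = \<tau> \<xi>2 c" using rho_v[OF v(1), of \<xi>2] v(2) gg v(1) by simp
      finally show "\<tau> \<xi>1 c = \<tau> \<xi>2 c" .
    qed
    hence "\<sigma> (Q \<xi>1) (iota_map G \<xi>1) = \<sigma> (Q \<xi>1) (iota_map G \<xi>2)" unfolding \<tau>_def using q by simp
    moreover have "inj_on (\<sigma> (Q \<xi>1)) (Strict (Q \<xi>1) R)" using sig[OF x1] by simp
    moreover have "iota_map G \<xi>2 \<in> Strict (Q \<xi>1) R" using Qi[OF x2] q by simp
    ultimately have ii: "iota_map G \<xi>1 = iota_map G \<xi>2" using Qi[OF x1] inj_onD by metis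
    show "\<xi>1 = \<xi>2"
    proof (rule Hom_ext[OF x1 x2])
      fix v assume v: "v \<in> verts G"
      have "\<xi>1 v = iota_map G \<xi>1 (Gam G \<xi>1 v)" using iota_eq[OF v, of \<xi>1] by simp
      also have "\<dots> = iota_map G \<xi>2 (Gam G \<xi>2 v)" using ii gg v by simp
      also have "\<dots> = \<xi>2 v" using iota_eq[OF v, of \<xi>2] by simp
      finally show "\<xi>1 v = \<xi>2 v" .
    qed
  qed
  show ?thesis using hom inj gam unfolding \<rho>_def by blast
qed


lemma iso_sym:
  assumes "digraph_iso G H"
  shows "digraph_iso H G"
proof -
  obtain f where f: "bij_betw f (verts G) (verts H)"
    "\<forall>v\<in>verts G. \<forall>w\<in>verts G. (v,w) \<in> arcs G \<longleftrightarrow> (f v, f w) \<in> arcs H"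
    using assms unfolding digraph_iso_def by blast
  define g where "g = inv_into (verts G) f"
  have g: "bij_betw g (verts H) (verts G)" unfolding g_def by (rule bij_betw_inv_into[OF f(1)])
  have "\<forall>v\<in>verts H. \<forall>w\<in>verts H. (v,w) \<in> arcs H \<longleftrightarrow> (g v, g w) \<in> arcs G"
  proof (intro ballI)
    fix v w assume v: "v \<in> verts H" and w: "w \<in> verts H"
    have gv: "g v \<in> verts G" "g w \<in> verts G" using g v w bij_betwE by blast+
    have fg: "f (g v) = v" "f (g w) = w" unfolding g_def
      using f(1) v w by (simp_all add: bij_betw_def f_inv_into_f)
    show "(v,w) \<in> arcs H \<longleftrightarrow> (g v, g w) \<in> arcs G"
      using f(2) gv fg by metis
  qed
  thus ?thesis using g unfolding digraph_iso_def by blast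
qed

lemma iso_trans:
  assumes "digraph_iso G H" "digraph_iso H K"
  shows "digraph_iso G K"
proof -
  obtain f where f: "bij_betw f (verts G) (verts H)"
    "\<forall>v\<in>verts G. \<forall>w\<in>verts G. (v,w) \<in> arcs G \<longleftrightarrow> (f v, f w) \<in> arcs H"
    using assms(1) unfolding digraph_iso_def by blast
  obtain g where g: "bij_betw g (verts H) (verts K)"
    "\<forall>v\<in>verts H. \<forall>w\<in>verts H. (v,w) \<in> arcs H \<longleftrightarrow> (g v, g w) \<in> arcs K"
    using assms(2) unfolding digraph_iso_def by blast
  have "bij_betw (g \<circ> f) (verts G) (verts K)" by (rule bij_betw_trans[OF f(1) g(1)])
  moreover have "\<forall>v\<in>verts G. \<forall>w\<in>verts G. (v,w) \<in> arcs G \<longleftrightarrow> ((g \<circ> f) v, (g \<circ> f) w) \<in> arcs K"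
  proof (intro ballI)
    fix v w assume v: "v \<in> verts G" and w: "w \<in> verts G"
    have "f v \<in> verts H" "f w \<in> verts H" using f(1) v w bij_betwE by blast+
    thus "(v,w) \<in> arcs G \<longleftrightarrow> ((g \<circ> f) v, (g \<circ> f) w) \<in> arcs K"
      using f(2) g(2) v w by simp
  qed
  ultimately show ?thesis unfolding digraph_iso_def by blast
qed

lemma iso_transport:
  assumes f: "bij_betw f (verts h) (verts g)"
    and fa: "\<forall>v\<in>verts h. \<forall>w\<in>verts h. (v,w) \<in> arcs h \<longleftrightarrow> (f v, f w) \<in> arcs g"
    and hs: "arcs h \<subseteq> verts h \<times> verts h"
  shows "(\<lambda>\<zeta>. restrict (\<zeta> \<circ> f) (verts h)) \<in> Strict g X \<rightarrow> Strict h X"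
    and "inj_on (\<lambda>\<zeta>. restrict (\<zeta> \<circ> f) (verts h)) (Strict g X)"
proof -
  have fv: "f v \<in> verts g" if "v \<in> verts h" for v using f that bij_betwE by blast
  show "(\<lambda>\<zeta>. restrict (\<zeta> \<circ> f) (verts h)) \<in> Strict g X \<rightarrow> Strict h X"
  proof (rule funcsetI)
    fix \<zeta> assume z: "\<zeta> \<in> Strict g X"
    have zh: "\<zeta> \<in> Hom g X" by (rule Strict_Hom[OF z])
    have hom: "restrict (\<zeta> \<circ> f) (verts h) \<in> Hom h X"
    proof (rule HomI)
      fix v assume "v \<in> verts h" thus "restrict (\<zeta> \<circ> f) (verts h) v \<in> verts X"
        using HomD2[OF zh fv] by simp
    next
      fix v assume "v \<notin> verts h" thus "restrict (\<zeta> \<circ> f) (verts h) v = undefined" by simp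
    next
      fix v w assume vw: "(v,w) \<in> arcs h"
      have vv: "v \<in> verts h" "w \<in> verts h" using vw hs by auto
      have "(f v, f w) \<in> arcs g" using fa vv vw by blast
      thus "(restrict (\<zeta> \<circ> f) (verts h) v, restrict (\<zeta> \<circ> f) (verts h) w) \<in> arcs X"
        using HomD[OF zh] vv by simp
    qed
    show "restrict (\<zeta> \<circ> f) (verts h) \<in> Strict h X"
    proof (rule StrictI[OF hom])
      fix v w assume vw: "(v,w) \<in> arcs h" "v \<noteq> w"
      have vv: "v \<in> verts h" "w \<in> verts h" using vw hs by auto
      have a: "(f v, f w) \<in> arcs g" using fa vv vw by blast
      have "f v \<noteq> f w" using f vv vw(2) unfolding bij_betw_def inj_on_def by blast
      hence "\<zeta> (f v) \<noteq> \<zeta> (f w)" by (rule StrictD[OF z a])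
      thus "restrict (\<zeta> \<circ> f) (verts h) v \<noteq> restrict (\<zeta> \<circ> f) (verts h) w" using vv by simp
    qed
  qed
  show "inj_on (\<lambda>\<zeta>. restrict (\<zeta> \<circ> f) (verts h)) (Strict g X)"
  proof (rule inj_onI)
    fix \<zeta>1 \<zeta>2 assume z1: "\<zeta>1 \<in> Strict g X" and z2: "\<zeta>2 \<in> Strict g X"
      and e: "restrict (\<zeta>1 \<circ> f) (verts h) = restrict (\<zeta>2 \<circ> f) (verts h)"
    show "\<zeta>1 = \<zeta>2"
    proof (rule Hom_ext[OF Strict_Hom[OF z1] Strict_Hom[OF z2]])
      fix c assume "c \<in> verts g"
      then obtain v where v: "v \<in> verts h" "c = f v" using f unfolding bij_betw_def by blast
      have "restrict (\<zeta>1 \<circ> f) (verts h) v = restrict (\<zeta>2 \<circ> f) (verts h) v" using e by simp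
      thus "\<zeta>1 c = \<zeta>2 c" using v by simp
    qed
  qed
qed

lemma fwd:
  fixes g :: "'a digraph" and R :: "'r digraph" and S :: "'s digraph"
  assumes reps: "is_rep_system D' Dr" and digs: "\<forall>G \<in> D'. is_digraph G"
    and GB: "Gamma_below Dr R S" and cls: "in_class D' g"
    and gs: "arcs g \<subseteq> verts g \<times> verts g"
  shows "\<exists>\<sigma>. \<sigma> \<in> Strict g R \<rightarrow> Strict g S \<and> inj_on \<sigma> (Strict g R)"
proof -
  obtain \<rho> where rho: "strong_Gamma_scheme Dr R S \<rho>" using GB unfolding Gamma_below_def by blast
  obtain G0 where G0: "G0 \<in> D'" "digraph_iso G0 g" using cls unfolding in_class_def by blast
  obtain h where h: "h \<in> Dr" "digraph_iso G0 h" using reps G0(1) unfolding is_rep_system_def by blast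
  have hD: "h \<in> D'" using h(1) reps unfolding is_rep_system_def by blast
  have hs: "arcs h \<subseteq> verts h \<times> verts h" using digs hD unfolding is_digraph_def by blast
  have hg: "digraph_iso h g" by (rule iso_trans[OF iso_sym[OF h(2)] G0(2)])
  have gh: "digraph_iso g h" by (rule iso_sym[OF hg])
  obtain f where f: "bij_betw f (verts h) (verts g)"
    "\<forall>v\<in>verts h. \<forall>w\<in>verts h. (v,w) \<in> arcs h \<longleftrightarrow> (f v, f w) \<in> arcs g"
    using hg unfolding digraph_iso_def by blast
  obtain f' where f': "bij_betw f' (verts g) (verts h)"
    "\<forall>v\<in>verts g. \<forall>w\<in>verts g. (v,w) \<in> arcs g \<longleftrightarrow> (f' v, f' w) \<in> arcs h"
    using gh unfolding digraph_iso_def by blast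
  define A where "A = (\<lambda>\<zeta>::'a \<Rightarrow> 'r. restrict (\<zeta> \<circ> f) (verts h))"
  define B where "B = (\<lambda>\<zeta>::nat \<Rightarrow> 's. restrict (\<zeta> \<circ> f') (verts g))"
  have A1: "A \<in> Strict g R \<rightarrow> Strict h R" and A2: "inj_on A (Strict g R)"
    unfolding A_def using iso_transport[OF f hs] by blast+
  have B1: "B \<in> Strict h S \<rightarrow> Strict g S" and B2: "inj_on B (Strict h S)"
    unfolding B_def using iso_transport[OF f' gs] by blast+
  have rh: "\<forall>\<xi> \<in> Hom h R. \<rho> h \<xi> \<in> Hom h S" "inj_on (\<rho> h) (Hom h R)"
     "\<forall>\<xi> \<in> Hom h R. \<forall>v \<in> verts h. Gam h (\<rho> h \<xi>) v = Gam h \<xi> v"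
    using rho h(1) unfolding strong_Gamma_scheme_def by blast+
  have R1: "\<rho> h \<zeta> \<in> Strict h S" if z: "\<zeta> \<in> Strict h R" for \<zeta>
  proof -
    have zh: "\<zeta> \<in> Hom h R" by (rule Strict_Hom[OF z])
    have rz: "\<rho> h \<zeta> \<in> Hom h S" using rh(1) zh by blast
    have "\<forall>v\<in>verts h. Gam h \<zeta> v = {v}" using strict_iff[OF hs zh] z by blast
    hence "\<forall>v\<in>verts h. Gam h (\<rho> h \<zeta>) v = {v}" using rh(3) zh by simp
    thus ?thesis using strict_iff[OF hs rz] by blast
  qed
  define \<sigma> where "\<sigma> = (\<lambda>\<zeta>. B (\<rho> h (A \<zeta>)))"
  have "\<sigma> \<in> Strict g R \<rightarrow> Strict g S"
    unfolding \<sigma>_def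
  proof (rule funcsetI)
    fix x assume "x \<in> Strict g R"
    hence "A x \<in> Strict h R" using A1 by (rule funcset_mem[rotated])
    hence "\<rho> h (A x) \<in> Strict h S" by (rule R1)
    thus "B (\<rho> h (A x)) \<in> Strict g S" using B1 by (rule funcset_mem[rotated])
  qed
  moreover have "inj_on \<sigma> (Strict g R)"
  proof (rule inj_onI)
    fix \<zeta>1 \<zeta>2 assume z1: "\<zeta>1 \<in> Strict g R" and z2: "\<zeta>2 \<in> Strict g R" and e: "\<sigma> \<zeta>1 = \<sigma> \<zeta>2"
    have a1: "A \<zeta>1 \<in> Strict h R" "A \<zeta>2 \<in> Strict h R" using funcset_mem[OF A1 z1] funcset_mem[OF A1 z2] by auto
    have r1: "\<rho> h (A \<zeta>1) \<in> Strict h S" "\<rho> h (A \<zeta>2) \<in> Strict h S" using R1 a1 by blast+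
    have "\<rho> h (A \<zeta>1) = \<rho> h (A \<zeta>2)" using inj_onD[OF B2 _ r1] e unfolding \<sigma>_def by blast
    hence "A \<zeta>1 = A \<zeta>2" using inj_onD[OF rh(2)] Strict_Hom a1 by blast
    thus "\<zeta>1 = \<zeta>2" using inj_onD[OF A2 _ z1 z2] by blast
  qed
  ultimately show ?thesis by blast
qed

lemma trans_antisym_transfer:
  assumes "digraph_iso G H" "arcs H \<subseteq> verts H \<times> verts H" "trans (arcs G)" "antisym (arcs G)"
  shows "trans (arcs H) \<and> antisym (arcs H)"
proof -
  obtain g where g: "bij_betw g (verts H) (verts G)"
    "\<forall>v\<in>verts H. \<forall>w\<in>verts H. (v,w) \<in> arcs H \<longleftrightarrow> (g v, g w) \<in> arcs G"
    using iso_sym[OF assms(1)] unfolding digraph_iso_def by blast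
  have "trans (arcs H)"
  proof (rule transI)
    fix a b c assume ab: "(a,b) \<in> arcs H" and bc: "(b,c) \<in> arcs H"
    have v: "a \<in> verts H" "b \<in> verts H" "c \<in> verts H" using ab bc assms(2) by auto
    have "(g a, g b) \<in> arcs G" "(g b, g c) \<in> arcs G" using g(2) v ab bc by blast+
    hence "(g a, g c) \<in> arcs G" using assms(3) unfolding trans_def by blast
    thus "(a,c) \<in> arcs H" using g(2) v by blast
  qed
  moreover have "antisym (arcs H)"
  proof (rule antisymI)
    fix a b assume ab: "(a,b) \<in> arcs H" and ba: "(b,a) \<in> arcs H"
    have v: "a \<in> verts H" "b \<in> verts H" using ab assms(2) by auto
    have "(g a, g b) \<in> arcs G" "(g b, g a) \<in> arcs G" using g(2) v ab ba by blast+
    hence "g a = g b" using assms(4) unfolding antisym_def by blast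
    thus "a = b" using g(1) v unfolding bij_betw_def inj_on_def by blast
  qed
  ultimately show ?thesis by blast
qed

lemma poset_ta: "is_poset G \<Longrightarrow> trans (arcs G) \<and> antisym (arcs G)"
  unfolding is_poset_def by blast

lemma poset_star_ta:
  assumes "is_poset_star G" shows "trans (arcs G) \<and> antisym (arcs G)"
proof -
  obtain P where P: "is_poset P" "G = remove_loops P" using assms unfolding is_poset_star_def by blast
  have aG: "arcs G = {(v,w) \<in> arcs P. v \<noteq> w}" using P(2) unfolding remove_loops_def arcs_def by simp
  have tP: "trans (arcs P)" and aP: "antisym (arcs P)" using P(1) unfolding is_poset_def by blast+
  have "trans (arcs G)"
  proof (rule transI)
    fix x y z assume xy: "(x,y) \<in> arcs G" and yz: "(y,z) \<in> arcs G"
    have p: "(x,y) \<in> arcs P" "(y,z) \<in> arcs P" "x \<noteq> y" using xy yz aG by auto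
    have "(x,z) \<in> arcs P" using p tP unfolding trans_def by blast
    moreover have "x \<noteq> z"
    proof
      assume "x = z" thus False using p aP unfolding antisym_def by blast
    qed
    ultimately show "(x,z) \<in> arcs G" using aG by simp
  qed
  moreover have "antisym (arcs G)" using aP unfolding aG antisym_def by blast
  ultimately show ?thesis by blast
qed

theorem proposition2:
  fixes D' Dr :: "nat digraph set" and R :: "'r digraph" and S :: "'s digraph"
  assumes D'_digraphs: "\<forall>G \<in> D'. is_digraph G"
    and reps: "is_rep_system D' Dr"
    and R_in: "in_class D' R"
    and R_dig: "is_digraph R"
    and S_dig: "is_digraph S"
  shows
   "((\<forall>G \<in> D'. \<forall>\<xi> \<in> Hom G R. in_class D' (quot G \<xi>)) \<longrightarrow>
      (Gamma_below Dr R S \<longleftrightarrow>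
         (\<forall>G \<in> D'. \<forall>\<xi> \<in> Hom G R. \<exists>\<sigma>.
             \<sigma> \<in> Strict (quot G \<xi>) R \<rightarrow> Strict (quot G \<xi>) S \<and>
             inj_on \<sigma> (Strict (quot G \<xi>) R))) \<and>
      (\<forall>\<sigma> :: nat set digraph \<Rightarrow> (nat set \<Rightarrow> 'r) \<Rightarrow> (nat set \<Rightarrow> 's).
         (\<forall>G \<in> D'. \<forall>\<xi> \<in> Hom G R.
             \<sigma> (quot G \<xi>) \<in> Strict (quot G \<xi>) R \<rightarrow> Strict (quot G \<xi>) S \<and>
             inj_on (\<sigma> (quot G \<xi>)) (Strict (quot G \<xi>) R)) \<longrightarrow>
         strong_Gamma_scheme Dr R S
           (\<lambda>G \<xi>. restrict (\<sigma> (quot G \<xi>) (iota_map G \<xi>) \<circ> pi_map G \<xi>) (verts G))))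
    \<and>
    (((\<forall>G \<in> D'. is_poset G) \<or> (\<forall>G \<in> D'. is_poset_star G)) \<and>
     (\<forall>G \<in> D'. \<forall>\<xi> \<in> Hom G R. in_class D' (tquot G \<xi>)) \<longrightarrow>
      (Gamma_below Dr R S \<longleftrightarrow>
         (\<forall>G \<in> D'. \<forall>\<xi> \<in> Hom G R. \<exists>\<sigma>.
             \<sigma> \<in> Strict (tquot G \<xi>) R \<rightarrow> Strict (tquot G \<xi>) S \<and>
             inj_on \<sigma> (Strict (tquot G \<xi>) R))) \<and>
      (\<forall>\<sigma> :: nat set digraph \<Rightarrow> (nat set \<Rightarrow> 'r) \<Rightarrow> (nat set \<Rightarrow> 's).
         (\<forall>G \<in> D'. \<forall>\<xi> \<in> Hom G R.
             \<sigma> (tquot G \<xi>) \<in> Strict (tquot G \<xi>) R \<rightarrow> Strict (tquot G \<xi>) S \<and>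
             inj_on (\<sigma> (tquot G \<xi>)) (Strict (tquot G \<xi>) R)) \<longrightarrow>
         strong_Gamma_scheme Dr R S
           (\<lambda>G \<xi>. restrict (\<sigma> (tquot G \<xi>) (iota_map G \<xi>) \<circ> pi_map G \<xi>) (verts G))))"
proof -
  have Dsub: "Dr \<subseteq> D'" using reps unfolding is_rep_system_def by blast
  have Gs: "arcs G \<subseteq> verts G \<times> verts G" if "G \<in> Dr" for G
    using that Dsub D'_digraphs unfolding is_digraph_def by blast
  have Rs: "arcs R \<subseteq> verts R \<times> verts R" using R_dig unfolding is_digraph_def by blast
  have partA: "(\<forall>G \<in> D'. \<forall>\<xi> \<in> Hom G R. in_class D' (quot G \<xi>)) \<longrightarrow>
      (Gamma_below Dr R S \<longleftrightarrow>
         (\<forall>G \<in> D'. \<forall>\<xi> \<in> Hom G R. \<exists>\<sigma>.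
             \<sigma> \<in> Strict (quot G \<xi>) R \<rightarrow> Strict (quot G \<xi>) S \<and>
             inj_on \<sigma> (Strict (quot G \<xi>) R))) \<and>
      (\<forall>\<sigma> :: nat set digraph \<Rightarrow> (nat set \<Rightarrow> 'r) \<Rightarrow> (nat set \<Rightarrow> 's).
         (\<forall>G \<in> D'. \<forall>\<xi> \<in> Hom G R.
             \<sigma> (quot G \<xi>) \<in> Strict (quot G \<xi>) R \<rightarrow> Strict (quot G \<xi>) S \<and>
             inj_on (\<sigma> (quot G \<xi>)) (Strict (quot G \<xi>) R)) \<longrightarrow>
         strong_Gamma_scheme Dr R S
           (\<lambda>G \<xi>. restrict (\<sigma> (quot G \<xi>) (iota_map G \<xi>) \<circ> pi_map G \<xi>) (verts G)))"
  proof (intro impI)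
    assume HA: "\<forall>G \<in> D'. \<forall>\<xi> \<in> Hom G R. in_class D' (quot G \<xi>)"
    have A2: "\<forall>\<sigma> :: nat set digraph \<Rightarrow> (nat set \<Rightarrow> 'r) \<Rightarrow> (nat set \<Rightarrow> 's).
         (\<forall>G \<in> D'. \<forall>\<xi> \<in> Hom G R.
             \<sigma> (quot G \<xi>) \<in> Strict (quot G \<xi>) R \<rightarrow> Strict (quot G \<xi>) S \<and>
             inj_on (\<sigma> (quot G \<xi>)) (Strict (quot G \<xi>) R)) \<longrightarrow>
         strong_Gamma_scheme Dr R S
           (\<lambda>G \<xi>. restrict (\<sigma> (quot G \<xi>) (iota_map G \<xi>) \<circ> pi_map G \<xi>) (verts G))"
    proof (intro allI impI)
      fix \<sigma> :: "nat set digraph \<Rightarrow> (nat set \<Rightarrow> 'r) \<Rightarrow> (nat set \<Rightarrow> 's)"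
      assume H: "\<forall>G \<in> D'. \<forall>\<xi> \<in> Hom G R.
             \<sigma> (quot G \<xi>) \<in> Strict (quot G \<xi>) R \<rightarrow> Strict (quot G \<xi>) S \<and>
             inj_on (\<sigma> (quot G \<xi>)) (Strict (quot G \<xi>) R)"
      show "strong_Gamma_scheme Dr R S
           (\<lambda>G \<xi>. restrict (\<sigma> (quot G \<xi>) (iota_map G \<xi>) \<circ> pi_map G \<xi>) (verts G))"
        unfolding strong_Gamma_scheme_def
      proof (intro ballI)
        fix G assume G: "G \<in> Dr"
        have GD: "G \<in> D'" using G Dsub by blast
        show "(\<forall>\<xi>\<in>Hom G R. restrict (\<sigma> (quot G \<xi>) (iota_map G \<xi>) \<circ> pi_map G \<xi>) (verts G) \<in> Hom G S) \<and>
     inj_on (\<lambda>\<xi>. restrict (\<sigma> (quot G \<xi>) (iota_map G \<xi>) \<circ> pi_map G \<xi>) (verts G)) (Hom G R) \<and>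
     (\<forall>\<xi>\<in>Hom G R. \<forall>v\<in>verts G. Gam G (restrict (\<sigma> (quot G \<xi>) (iota_map G \<xi>) \<circ> pi_map G \<xi>) (verts G)) v = Gam G \<xi> v)"
        proof (rule scheme_G[where Q = "quot G"])
          show "arcs G \<subseteq> verts G \<times> verts G" by (rule Gs[OF G])
        next
          fix \<xi>1 \<xi>2 assume "\<forall>v\<in>verts G. Gam G \<xi>1 v = Gam G \<xi>2 v"
          thus "quot G \<xi>1 = quot G \<xi>2" by (rule quot_cong)
        next
          fix \<xi> show "verts (quot G \<xi>) = verts (quot G \<xi>)" by simp
        next
          fix \<xi> show "arcs (quot G \<xi>) \<subseteq> arcs (quot G \<xi>)" by simp
        next
          fix \<xi> assume "\<xi> \<in> Hom G R"
          thus "iota_map G \<xi> \<in> Strict (quot G \<xi>) R" by (rule iota_strict_quot[OF Gs[OF G]])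
        next
          fix \<xi> assume "\<xi> \<in> Hom G R"
          thus "\<sigma> (quot G \<xi>) \<in> Strict (quot G \<xi>) R \<rightarrow> Strict (quot G \<xi>) S \<and> inj_on (\<sigma> (quot G \<xi>)) (Strict (quot G \<xi>) R)"
            using H GD by blast
        qed
      qed
    qed
    have A1: "Gamma_below Dr R S \<longleftrightarrow>
         (\<forall>G \<in> D'. \<forall>\<xi> \<in> Hom G R. \<exists>\<sigma>.
             \<sigma> \<in> Strict (quot G \<xi>) R \<rightarrow> Strict (quot G \<xi>) S \<and>
             inj_on \<sigma> (Strict (quot G \<xi>) R))"
    proof
      assume GB: "Gamma_below Dr R S"
      show "\<forall>G \<in> D'. \<forall>\<xi> \<in> Hom G R. \<exists>\<sigma>.
             \<sigma> \<in> Strict (quot G \<xi>) R \<rightarrow> Strict (quot G \<xi>) S \<and>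
             inj_on \<sigma> (Strict (quot G \<xi>) R)"
      proof (intro ballI)
        fix G \<xi> assume "G \<in> D'" "\<xi> \<in> Hom G R"
        hence c: "in_class D' (quot G \<xi>)" using HA by blast
        show "\<exists>\<sigma>. \<sigma> \<in> Strict (quot G \<xi>) R \<rightarrow> Strict (quot G \<xi>) S \<and> inj_on \<sigma> (Strict (quot G \<xi>) R)"
          by (rule fwd[OF reps D'_digraphs GB c quot_arcs_sub])
      qed
    next
      assume E: "\<forall>G \<in> D'. \<forall>\<xi> \<in> Hom G R. \<exists>\<sigma>.
             \<sigma> \<in> Strict (quot G \<xi>) R \<rightarrow> Strict (quot G \<xi>) S \<and>
             inj_on \<sigma> (Strict (quot G \<xi>) R)"
      define \<sigma>0 :: "nat set digraph \<Rightarrow> (nat set \<Rightarrow> 'r) \<Rightarrow> (nat set \<Rightarrow> 's)" where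
        "\<sigma>0 = (\<lambda>q. SOME \<sigma>. \<sigma> \<in> Strict q R \<rightarrow> Strict q S \<and> inj_on \<sigma> (Strict q R))"
      have "\<forall>G \<in> D'. \<forall>\<xi> \<in> Hom G R.
             \<sigma>0 (quot G \<xi>) \<in> Strict (quot G \<xi>) R \<rightarrow> Strict (quot G \<xi>) S \<and>
             inj_on (\<sigma>0 (quot G \<xi>)) (Strict (quot G \<xi>) R)"
      proof (intro ballI)
        fix G \<xi> assume "G \<in> D'" "\<xi> \<in> Hom G R"
        hence "\<exists>\<sigma>. \<sigma> \<in> Strict (quot G \<xi>) R \<rightarrow> Strict (quot G \<xi>) S \<and> inj_on \<sigma> (Strict (quot G \<xi>) R)"
          using E by blast
        thus "\<sigma>0 (quot G \<xi>) \<in> Strict (quot G \<xi>) R \<rightarrow> Strict (quot G \<xi>) S \<and>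
             inj_on (\<sigma>0 (quot G \<xi>)) (Strict (quot G \<xi>) R)"
          unfolding \<sigma>0_def by (rule someI_ex)
      qed
      hence "strong_Gamma_scheme Dr R S
           (\<lambda>G \<xi>. restrict (\<sigma>0 (quot G \<xi>) (iota_map G \<xi>) \<circ> pi_map G \<xi>) (verts G))"
        using A2 by blast
      thus "Gamma_below Dr R S" unfolding Gamma_below_def by blast
    qed
    show "(Gamma_below Dr R S \<longleftrightarrow>
         (\<forall>G \<in> D'. \<forall>\<xi> \<in> Hom G R. \<exists>\<sigma>.
             \<sigma> \<in> Strict (quot G \<xi>) R \<rightarrow> Strict (quot G \<xi>) S \<and>
             inj_on \<sigma> (Strict (quot G \<xi>) R))) \<and>
      (\<forall>\<sigma> :: nat set digraph \<Rightarrow> (nat set \<Rightarrow> 'r) \<Rightarrow> (nat set \<Rightarrow> 's).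
         (\<forall>G \<in> D'. \<forall>\<xi> \<in> Hom G R.
             \<sigma> (quot G \<xi>) \<in> Strict (quot G \<xi>) R \<rightarrow> Strict (quot G \<xi>) S \<and>
             inj_on (\<sigma> (quot G \<xi>)) (Strict (quot G \<xi>) R)) \<longrightarrow>
         strong_Gamma_scheme Dr R S
           (\<lambda>G \<xi>. restrict (\<sigma> (quot G \<xi>) (iota_map G \<xi>) \<circ> pi_map G \<xi>) (verts G)))"
      using A1 A2 by blast
  qed
  have partB: "((\<forall>G \<in> D'. is_poset G) \<or> (\<forall>G \<in> D'. is_poset_star G)) \<and>
     (\<forall>G \<in> D'. \<forall>\<xi> \<in> Hom G R. in_class D' (tquot G \<xi>)) \<longrightarrow>
      (Gamma_below Dr R S \<longleftrightarrow>
         (\<forall>G \<in> D'. \<forall>\<xi> \<in> Hom G R. \<exists>\<sigma>.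
             \<sigma> \<in> Strict (tquot G \<xi>) R \<rightarrow> Strict (tquot G \<xi>) S \<and>
             inj_on \<sigma> (Strict (tquot G \<xi>) R))) \<and>
      (\<forall>\<sigma> :: nat set digraph \<Rightarrow> (nat set \<Rightarrow> 'r) \<Rightarrow> (nat set \<Rightarrow> 's).
         (\<forall>G \<in> D'. \<forall>\<xi> \<in> Hom G R.
             \<sigma> (tquot G \<xi>) \<in> Strict (tquot G \<xi>) R \<rightarrow> Strict (tquot G \<xi>) S \<and>
             inj_on (\<sigma> (tquot G \<xi>)) (Strict (tquot G \<xi>) R)) \<longrightarrow>
         strong_Gamma_scheme Dr R S
           (\<lambda>G \<xi>. restrict (\<sigma> (tquot G \<xi>) (iota_map G \<xi>) \<circ> pi_map G \<xi>) (verts G)))"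
  proof (intro impI)
    assume HB: "((\<forall>G \<in> D'. is_poset G) \<or> (\<forall>G \<in> D'. is_poset_star G)) \<and>
     (\<forall>G \<in> D'. \<forall>\<xi> \<in> Hom G R. in_class D' (tquot G \<xi>))"
    hence HA: "\<forall>G \<in> D'. \<forall>\<xi> \<in> Hom G R. in_class D' (tquot G \<xi>)" by blast
    obtain G0 where G0: "G0 \<in> D'" "digraph_iso G0 R" using R_in unfolding in_class_def by blast
    have "trans (arcs G0) \<and> antisym (arcs G0)"
      using HB G0(1) poset_ta poset_star_ta by blast
    hence Rta: "trans (arcs R) \<and> antisym (arcs R)"
      using trans_antisym_transfer[OF G0(2) Rs] by blast
    have A2: "\<forall>\<sigma> :: nat set digraph \<Rightarrow> (nat set \<Rightarrow> 'r) \<Rightarrow> (nat set \<Rightarrow> 's).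
         (\<forall>G \<in> D'. \<forall>\<xi> \<in> Hom G R.
             \<sigma> (tquot G \<xi>) \<in> Strict (tquot G \<xi>) R \<rightarrow> Strict (tquot G \<xi>) S \<and>
             inj_on (\<sigma> (tquot G \<xi>)) (Strict (tquot G \<xi>) R)) \<longrightarrow>
         strong_Gamma_scheme Dr R S
           (\<lambda>G \<xi>. restrict (\<sigma> (tquot G \<xi>) (iota_map G \<xi>) \<circ> pi_map G \<xi>) (verts G))"
    proof (intro allI impI)
      fix \<sigma> :: "nat set digraph \<Rightarrow> (nat set \<Rightarrow> 'r) \<Rightarrow> (nat set \<Rightarrow> 's)"
      assume H: "\<forall>G \<in> D'. \<forall>\<xi> \<in> Hom G R.
             \<sigma> (tquot G \<xi>) \<in> Strict (tquot G \<xi>) R \<rightarrow> Strict (tquot G \<xi>) S \<and>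
             inj_on (\<sigma> (tquot G \<xi>)) (Strict (tquot G \<xi>) R)"
      show "strong_Gamma_scheme Dr R S
           (\<lambda>G \<xi>. restrict (\<sigma> (tquot G \<xi>) (iota_map G \<xi>) \<circ> pi_map G \<xi>) (verts G))"
        unfolding strong_Gamma_scheme_def
      proof (intro ballI)
        fix G assume G: "G \<in> Dr"
        have GD: "G \<in> D'" using G Dsub by blast
        show "(\<forall>\<xi>\<in>Hom G R. restrict (\<sigma> (tquot G \<xi>) (iota_map G \<xi>) \<circ> pi_map G \<xi>) (verts G) \<in> Hom G S) \<and>
     inj_on (\<lambda>\<xi>. restrict (\<sigma> (tquot G \<xi>) (iota_map G \<xi>) \<circ> pi_map G \<xi>) (verts G)) (Hom G R) \<and>
     (\<forall>\<xi>\<in>Hom G R. \<forall>v\<in>verts G. Gam G (restrict (\<sigma> (tquot G \<xi>) (iota_map G \<xi>) \<circ> pi_map G \<xi>) (verts G)) v = Gam G \<xi> v)"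
        proof (rule scheme_G[where Q = "tquot G"])
          show "arcs G \<subseteq> verts G \<times> verts G" by (rule Gs[OF G])
        next
          fix \<xi>1 \<xi>2 assume "\<forall>v\<in>verts G. Gam G \<xi>1 v = Gam G \<xi>2 v"
          thus "tquot G \<xi>1 = tquot G \<xi>2" by (rule tquot_cong)
        next
          fix \<xi> show "verts (tquot G \<xi>) = verts (quot G \<xi>)" by (rule tquot_verts)
        next
          fix \<xi> show "arcs (quot G \<xi>) \<subseteq> arcs (tquot G \<xi>)" unfolding tquot_arcs by auto
        next
          fix \<xi> assume "\<xi> \<in> Hom G R"
          thus "iota_map G \<xi> \<in> Strict (tquot G \<xi>) R" by (rule iota_strict_tquot[OF Gs[OF G] _ Rta[THEN conjunct1] Rta[THEN conjunct2]])
        next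
          fix \<xi> assume "\<xi> \<in> Hom G R"
          thus "\<sigma> (tquot G \<xi>) \<in> Strict (tquot G \<xi>) R \<rightarrow> Strict (tquot G \<xi>) S \<and> inj_on (\<sigma> (tquot G \<xi>)) (Strict (tquot G \<xi>) R)"
            using H GD by blast
        qed
      qed
    qed
    have A1: "Gamma_below Dr R S \<longleftrightarrow>
         (\<forall>G \<in> D'. \<forall>\<xi> \<in> Hom G R. \<exists>\<sigma>.
             \<sigma> \<in> Strict (tquot G \<xi>) R \<rightarrow> Strict (tquot G \<xi>) S \<and>
             inj_on \<sigma> (Strict (tquot G \<xi>) R))"
    proof
      assume GB: "Gamma_below Dr R S"
      show "\<forall>G \<in> D'. \<forall>\<xi> \<in> Hom G R. \<exists>\<sigma>.
             \<sigma> \<in> Strict (tquot G \<xi>) R \<rightarrow> Strict (tquot G \<xi>) S \<and>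
             inj_on \<sigma> (Strict (tquot G \<xi>) R)"
      proof (intro ballI)
        fix G \<xi> assume "G \<in> D'" "\<xi> \<in> Hom G R"
        hence c: "in_class D' (tquot G \<xi>)" using HA by blast
        show "\<exists>\<sigma>. \<sigma> \<in> Strict (tquot G \<xi>) R \<rightarrow> Strict (tquot G \<xi>) S \<and> inj_on \<sigma> (Strict (tquot G \<xi>) R)"
          by (rule fwd[OF reps D'_digraphs GB c tquot_arcs_sub])
      qed
    next
      assume E: "\<forall>G \<in> D'. \<forall>\<xi> \<in> Hom G R. \<exists>\<sigma>.
             \<sigma> \<in> Strict (tquot G \<xi>) R \<rightarrow> Strict (tquot G \<xi>) S \<and>
             inj_on \<sigma> (Strict (tquot G \<xi>) R)"
      define \<sigma>0 :: "nat set digraph \<Rightarrow> (nat set \<Rightarrow> 'r) \<Rightarrow> (nat set \<Rightarrow> 's)" where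
        "\<sigma>0 = (\<lambda>q. SOME \<sigma>. \<sigma> \<in> Strict q R \<rightarrow> Strict q S \<and> inj_on \<sigma> (Strict q R))"
      have "\<forall>G \<in> D'. \<forall>\<xi> \<in> Hom G R.
             \<sigma>0 (tquot G \<xi>) \<in> Strict (tquot G \<xi>) R \<rightarrow> Strict (tquot G \<xi>) S \<and>
             inj_on (\<sigma>0 (tquot G \<xi>)) (Strict (tquot G \<xi>) R)"
      proof (intro ballI)
        fix G \<xi> assume "G \<in> D'" "\<xi> \<in> Hom G R"
        hence "\<exists>\<sigma>. \<sigma> \<in> Strict (tquot G \<xi>) R \<rightarrow> Strict (tquot G \<xi>) S \<and> inj_on \<sigma> (Strict (tquot G \<xi>) R)"
          using E by blast
        thus "\<sigma>0 (tquot G \<xi>) \<in> Strict (tquot G \<xi>) R \<rightarrow> Strict (tquot G \<xi>) S \<and>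
             inj_on (\<sigma>0 (tquot G \<xi>)) (Strict (tquot G \<xi>) R)"
          unfolding \<sigma>0_def by (rule someI_ex)
      qed
      hence "strong_Gamma_scheme Dr R S
           (\<lambda>G \<xi>. restrict (\<sigma>0 (tquot G \<xi>) (iota_map G \<xi>) \<circ> pi_map G \<xi>) (verts G))"
        using A2 by blast
      thus "Gamma_below Dr R S" unfolding Gamma_below_def by blast
    qed
    show "(Gamma_below Dr R S \<longleftrightarrow>
         (\<forall>G \<in> D'. \<forall>\<xi> \<in> Hom G R. \<exists>\<sigma>.
             \<sigma> \<in> Strict (tquot G \<xi>) R \<rightarrow> Strict (tquot G \<xi>) S \<and>
             inj_on \<sigma> (Strict (tquot G \<xi>) R))) \<and>
      (\<forall>\<sigma> :: nat set digraph \<Rightarrow> (nat set \<Rightarrow> 'r) \<Rightarrow> (nat set \<Rightarrow> 's).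
         (\<forall>G \<in> D'. \<forall>\<xi> \<in> Hom G R.
             \<sigma> (tquot G \<xi>) \<in> Strict (tquot G \<xi>) R \<rightarrow> Strict (tquot G \<xi>) S \<and>
             inj_on (\<sigma> (tquot G \<xi>)) (Strict (tquot G \<xi>) R)) \<longrightarrow>
         strong_Gamma_scheme Dr R S
           (\<lambda>G \<xi>. restrict (\<sigma> (tquot G \<xi>) (iota_map G \<xi>) \<circ> pi_map G \<xi>) (verts G)))"
      using A1 A2 by blast
  qed
  show ?thesis using partA partB by blast
qed

end
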